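(* Let $\vec H$ be a DAG. Then there exist graphs $H_1,H_2\in\mathcal G_{\vec H}$ such that $\mathrm{td}(H_1)\le \mathrm{dtd}(\vec H)\le \mathrm{td}(H_2)$.
   Context: For a DAG $\vec H$, a source is a vertex of in-degree $0$; $S$ denotes the set of sources and $N$ the set of non-sources; $R(s)$ is the set of vertices reachable from $s$. $\mathrm{Bip}(\vec H)$ is the bipartite graph with parts $S$ and $N$ in which $s\in S$ and $v\in N$ are adjacent iff $v\in R(s)$. $\mathcal G_{\vec H}$ is the set of all graphs obtained from $\mathrm{Bip}(\vec H)$ by contracting, for each non-source $v$, one edge incident to $v$ (so that all non-sources are eliminated and the resulting graph has vertex set $S$). Equivalently, for a choice of map $f:N\to S$ with $v\in R(f(v))$, the graph has vertex set $S$ and distinct $s,s'$ adjacent iff there is $v\in N$ with $v\in R(s)\cap R(s')$ and $f(v)\in\{s,s'\}$. A DAG elimination forest of $\vec H$ is defined recursively: if $\vec H$ is empty, it is empty; if the underlying undirected graph is disconnected, it is the union of DAG elimination forests of its components; if connected with exactly one source $s$, it is the single-node tree $s$; otherwise it is a tree whose root is an arbitrarily chosen source $s$ and whose subtrees are the trees of a DAG elimination forest of the DAG obtained by deleting $s$ and all vertices reachable from $s$. The depth of a rooted forest is the maximum number of nodes on a root-to-leaf path; $\mathrm{dtd}(\vec H)$ is the minimum depth of a DAG elimination forest. $\mathrm{td}$ denotes the usual treedepth of an undirected graph. *)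

theory Defs
  imports Main
begin

text \<open>Digraphs are pairs (V, E) with a vertex set V and arcs E, where (u,v) \<in> E means u -> v.
  Undirected graphs are pairs (V, E) with E a symmetric irreflexive relation on V.\<close>

definition dag :: "'a set \<Rightarrow> ('a \<times> 'a) set \<Rightarrow> bool" where
  "dag V E \<longleftrightarrow> finite V \<and> E \<subseteq> V \<times> V \<and> acyclic E"

definition sources :: "'a set \<Rightarrow> ('a \<times> 'a) set \<Rightarrow> 'a set" where
  "sources V E = {v \<in> V. \<not> (\<exists>u. (u, v) \<in> E)}"

definition nonsources :: "'a set \<Rightarrow> ('a \<times> 'a) set \<Rightarrow> 'a set" where
  "nonsources V E = V - sources V E"

definition reach :: "('a \<times> 'a) set \<Rightarrow> 'a \<Rightarrow> 'a set" where
  "reach E s = E\<^sup>* `` {s}"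

definition induced :: "('a \<times> 'a) set \<Rightarrow> 'a set \<Rightarrow> ('a \<times> 'a) set" where
  "induced E C = E \<inter> (C \<times> C)"

definition und :: "'a set \<Rightarrow> ('a \<times> 'a) set \<Rightarrow> ('a \<times> 'a) set" where
  "und V E = {(x, y). x \<in> V \<and> y \<in> V \<and> ((x, y) \<in> E \<or> (y, x) \<in> E)}"

definition comps :: "'a set \<Rightarrow> ('a \<times> 'a) set \<Rightarrow> 'a set set" where
  "comps V E = {(und V E)\<^sup>* `` {v} | v. v \<in> V}"

definition gconnected :: "'a set \<Rightarrow> ('a \<times> 'a) set \<Rightarrow> bool" where
  "gconnected V E \<longleftrightarrow> V \<noteq> {} \<and> (\<forall>x\<in>V. \<forall>y\<in>V. (x, y) \<in> (und V E)\<^sup>*)"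

inductive dag_elim_depth :: "'a set \<Rightarrow> ('a \<times> 'a) set \<Rightarrow> nat \<Rightarrow> bool" where
  empty: "V = {} \<Longrightarrow> dag_elim_depth V E 0"
| disconnected: "\<lbrakk> V \<noteq> {}; \<not> gconnected V E;
     \<forall>C. C \<in> comps V E \<longrightarrow> dag_elim_depth C (induced E C) (d C) \<rbrakk>
   \<Longrightarrow> dag_elim_depth V E (Max (d ` comps V E))"
| one_source: "\<lbrakk> gconnected V E; sources V E = {s} \<rbrakk> \<Longrightarrow> dag_elim_depth V E 1"
| root: "\<lbrakk> gconnected V E; \<not> (\<exists>t. sources V E = {t}); s \<in> sources V E;
     dag_elim_depth (V - reach E s) (induced E (V - reach E s)) d \<rbrakk>
   \<Longrightarrow> dag_elim_depth V E (Suc d)"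

definition dtd :: "'a set \<Rightarrow> ('a \<times> 'a) set \<Rightarrow> nat" where
  "dtd V E = (LEAST d. dag_elim_depth V E d)"

inductive td_depth :: "'a set \<Rightarrow> ('a \<times> 'a) set \<Rightarrow> nat \<Rightarrow> bool" where
  empty: "V = {} \<Longrightarrow> td_depth V E 0"
| disconnected: "\<lbrakk> V \<noteq> {}; \<not> gconnected V E;
     \<forall>C. C \<in> comps V E \<longrightarrow> td_depth C (induced E C) (d C) \<rbrakk>
   \<Longrightarrow> td_depth V E (Max (d ` comps V E))"
| connected: "\<lbrakk> gconnected V E; v \<in> V;
     td_depth (V - {v}) (induced E (V - {v})) d \<rbrakk>
   \<Longrightarrow> td_depth V E (Suc d)"

definition td :: "'a set \<Rightarrow> ('a \<times> 'a) set \<Rightarrow> nat" where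
  "td V E = (LEAST d. td_depth V E d)"

definition contraction_graphs :: "'a set \<Rightarrow> ('a \<times> 'a) set \<Rightarrow> ('a \<times> 'a) set set" where
  "contraction_graphs V E =
     {{(s, s'). s \<in> sources V E \<and> s' \<in> sources V E \<and> s \<noteq> s' \<and>
         (\<exists>v \<in> nonsources V E. v \<in> reach E s \<and> v \<in> reach E s' \<and> f v \<in> {s, s'})}
      | f. \<forall>v \<in> nonsources V E. f v \<in> sources V E \<and> v \<in> reach E (f v)}"

end

theory Submission
  imports Defs
begin


definition Hf :: "'a set \<Rightarrow> ('a \<times> 'a) set \<Rightarrow> ('a \<Rightarrow> 'a) \<Rightarrow> ('a \<times> 'a) set" where
  "Hf V E f = {(s, s'). s \<in> sources V E \<and> s' \<in> sources V E \<and> s \<noteq> s' \<and>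
         (\<exists>v \<in> nonsources V E. v \<in> reach E s \<and> v \<in> reach E s' \<and> f v \<in> {s, s'})}"

definition valid :: "'a set \<Rightarrow> ('a \<times> 'a) set \<Rightarrow> ('a \<Rightarrow> 'a) \<Rightarrow> bool" where
  "valid V E f \<longleftrightarrow> (\<forall>v \<in> nonsources V E. f v \<in> sources V E \<and> v \<in> reach E (f v))"

definition rank :: "'a set \<Rightarrow> ('a \<times> 'a) set \<Rightarrow> ('a \<Rightarrow> nat) \<Rightarrow> nat \<Rightarrow> bool" where
  "rank V H l k \<longleftrightarrow> (\<forall>x\<in>V. l x < k) \<and>
     (\<forall>X. X \<subseteq> V \<longrightarrow> gconnected X H \<longrightarrow> (\<exists>x\<in>X. \<forall>y\<in>X. y \<noteq> x \<longrightarrow> l y < l x))"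

definition cc :: "'a set \<Rightarrow> ('a \<times> 'a) set \<Rightarrow> 'a \<Rightarrow> 'a set" where
  "cc V E x = (und V E)\<^sup>* `` {x}"

lemma Hf_in: "valid V E f \<Longrightarrow> Hf V E f \<in> contraction_graphs V E"
  unfolding contraction_graphs_def Hf_def valid_def by blast

lemma gconn_mono:
  assumes "gconnected X H1" "\<And>a b. a \<in> X \<Longrightarrow> b \<in> X \<Longrightarrow> (a,b) \<in> H1 \<Longrightarrow> (a,b) \<in> H2 \<or> (b,a) \<in> H2"
  shows "gconnected X H2"
proof -
  have "und X H1 \<subseteq> und X H2" using assms(2) unfolding und_def by blast
  then show ?thesis using assms(1) rtrancl_mono unfolding gconnected_def by blast
qed

lemma rank_mono:
  assumes "rank S H l k" "S' \<subseteq> S" "H' \<subseteq> H"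
  shows "rank S' H' l k"
  unfolding rank_def
proof (intro conjI allI impI)
  show "\<forall>x\<in>S'. l x < k" using assms unfolding rank_def by blast
  fix X assume "X \<subseteq> S'" "gconnected X H'"
  then have "gconnected X H" using gconn_mono[of X H' H] assms(3) by blast
  moreover have "X \<subseteq> S" using \<open>X \<subseteq> S'\<close> assms(2) by blast
  ultimately show "\<exists>x\<in>X. \<forall>y\<in>X. y \<noteq> x \<longrightarrow> l y < l x"
    using assms(1) unfolding rank_def by blast
qed

lemma und_sub: "und V E \<subseteq> V \<times> V" unfolding und_def by auto
lemma und_sym: "sym (und V E)" unfolding und_def sym_def by auto

lemma rtrancl_in: "(x,y) \<in> r\<^sup>* \<Longrightarrow> r \<subseteq> V \<times> V \<Longrightarrow> x \<in> V \<Longrightarrow> y \<in> V"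
  by (induction rule: rtrancl_induct) auto

lemma und_rt_sym: "(x,y) \<in> (und V E)\<^sup>* \<Longrightarrow> (y,x) \<in> (und V E)\<^sup>*"
  using sym_rtrancl[OF und_sym] by (rule symD)

lemma cc_sub: "x \<in> V \<Longrightarrow> cc V E x \<subseteq> V"
proof
  fix y assume "x \<in> V" "y \<in> cc V E x"
  then have "(x,y) \<in> (und V E)\<^sup>*" unfolding cc_def by simp
  from rtrancl_in[OF this und_sub \<open>x \<in> V\<close>] show "y \<in> V" .
qed

lemma cc_self: "x \<in> cc V E x" unfolding cc_def by auto

lemma cc_eq: "y \<in> cc V E x \<Longrightarrow> cc V E y = cc V E x"
proof -
  assume "y \<in> cc V E x"
  then have xy: "(x,y) \<in> (und V E)\<^sup>*" unfolding cc_def by simp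
  then have yx: "(y,x) \<in> (und V E)\<^sup>*" by (rule und_rt_sym)
  show ?thesis
  proof
    show "cc V E y \<subseteq> cc V E x" unfolding cc_def using xy by (auto intro: rtrancl_trans)
    show "cc V E x \<subseteq> cc V E y" unfolding cc_def using yx by (auto intro: rtrancl_trans)
  qed
qed

lemma comps_eq: "comps V E = cc V E ` V"
  unfolding comps_def cc_def by auto

lemma comps_finite: "finite V \<Longrightarrow> finite (comps V E)"
  by (simp add: comps_eq)

lemma comp_proper:
  assumes "\<not> gconnected V E" "V \<noteq> {}" "C \<in> comps V E"
  shows "C \<subset> V"
proof -
  obtain x where x: "x \<in> V" "C = cc V E x" using assms(3) unfolding comps_eq by auto
  have "C \<subseteq> V" using cc_sub[OF x(1)] x(2) by simp
  moreover have "C \<noteq> V"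
  proof
    assume "C = V"
    have "\<forall>a\<in>V. \<forall>b\<in>V. (a,b) \<in> (und V E)\<^sup>*"
    proof (intro ballI)
      fix a b assume "a \<in> V" "b \<in> V"
      then have "a \<in> cc V E x" "b \<in> cc V E x" using x(2) \<open>C = V\<close> by blast+
      then have "(x,a) \<in> (und V E)\<^sup>*" "(x,b) \<in> (und V E)\<^sup>*" unfolding cc_def by auto
      then show "(a,b) \<in> (und V E)\<^sup>*" using und_rt_sym rtrancl_trans by metis
    qed
    then show False using assms(1,2) unfolding gconnected_def by simp
  qed
  ultimately show ?thesis by blast
qed

definition pclosed :: "'a set \<Rightarrow> ('a \<times> 'a) set \<Rightarrow> bool" where
  "pclosed D E \<longleftrightarrow> (\<forall>u x. (u,x) \<in> E \<longrightarrow> x \<in> D \<longrightarrow> u \<in> D)"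

lemma pclosed_path:
  assumes "(t,v) \<in> E\<^sup>*" "pclosed D E" "v \<in> D"
  shows "(t,v) \<in> (induced E D)\<^sup>* \<and> t \<in> D"
  using assms(1)
proof (induction rule: converse_rtrancl_induct)
  case base then show ?case using assms by auto
next
  case (step y z)
  then have "y \<in> D" using assms(2) unfolding pclosed_def by blast
  then have "(y,z) \<in> induced E D" using step unfolding induced_def by auto
  then show ?case using step \<open>y \<in> D\<close> by (meson converse_rtrancl_into_rtrancl)
qed

lemma induced_rt: "(a,b) \<in> (induced E D)\<^sup>* \<Longrightarrow> (a,b) \<in> E\<^sup>*"
  unfolding induced_def using rtrancl_mono by blast

lemma pclosed_sources:
  assumes "pclosed D E" "D \<subseteq> V"
  shows "sources D (induced E D) = sources V E \<inter> D"
  using assms unfolding sources_def pclosed_def induced_def by blast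

lemma pclosed_nonsources:
  assumes "pclosed D E" "D \<subseteq> V"
  shows "nonsources D (induced E D) = nonsources V E \<inter> D"
  using pclosed_sources[OF assms] assms(2) unfolding nonsources_def by blast

lemma pclosed_valid:
  assumes "pclosed D E" "D \<subseteq> V" "valid V E f"
  shows "valid D (induced E D) f"
  unfolding valid_def
proof
  fix v assume "v \<in> nonsources D (induced E D)"
  then have v: "v \<in> nonsources V E" "v \<in> D" using pclosed_nonsources[OF assms(1,2)] by auto
  then have "f v \<in> sources V E" "(f v, v) \<in> E\<^sup>*" using assms(3) unfolding valid_def reach_def by auto
  with pclosed_path[OF this(2) assms(1) v(2)] show "f v \<in> sources D (induced E D) \<and> v \<in> reach (induced E D) (f v)"
    using pclosed_sources[OF assms(1,2)] unfolding reach_def by auto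
qed

lemma pclosed_Hf:
  assumes "pclosed D E" "D \<subseteq> V"
  shows "Hf D (induced E D) f \<subseteq> Hf V E f"
proof
  fix p assume "p \<in> Hf D (induced E D) f"
  then obtain s s' v where p: "p = (s,s')" "s \<in> sources D (induced E D)" "s' \<in> sources D (induced E D)" "s \<noteq> s'"
    "v \<in> nonsources D (induced E D)" "(s,v) \<in> (induced E D)\<^sup>*" "(s',v) \<in> (induced E D)\<^sup>*" "f v \<in> {s,s'}"
    unfolding Hf_def reach_def by auto
  have "s \<in> sources V E" "s' \<in> sources V E" "v \<in> nonsources V E"
    using p pclosed_sources[OF assms] pclosed_nonsources[OF assms] by auto
  moreover have "(s,v) \<in> E\<^sup>*" "(s',v) \<in> E\<^sup>*" using induced_rt[OF p(6)] induced_rt[OF p(7)] by auto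
  ultimately show "p \<in> Hf V E f" using p unfolding Hf_def reach_def by auto
qed

lemma cc_pclosed:
  assumes "E \<subseteq> V \<times> V" "x0 \<in> V"
  shows "pclosed (cc V E x0) E"
  unfolding pclosed_def
proof (intro allI impI)
  fix u x assume "(u,x) \<in> E" "x \<in> cc V E x0"
  then have "(x,u) \<in> und V E" using assms unfolding und_def by auto
  then show "u \<in> cc V E x0" using \<open>x \<in> cc V E x0\<close> unfolding cc_def
    by (meson Image_singleton_iff rtrancl.rtrancl_into_rtrancl)
qed

lemma cc_fclosed:
  assumes "E \<subseteq> V \<times> V" "x \<in> cc V E x0" "(x,y) \<in> E\<^sup>*"
  shows "y \<in> cc V E x0"
  using assms(3,2)
proof (induction rule: rtrancl_induct)
  case base then show ?case .
next
  case (step y z)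
  then have "(y,z) \<in> und V E" using assms(1) unfolding und_def by auto
  then show ?case using step unfolding cc_def
    by (meson Image_singleton_iff rtrancl.rtrancl_into_rtrancl)
qed

lemma reach_source:
  assumes "finite V" "E \<subseteq> V \<times> V" "acyclic E"
  shows "v \<in> V \<Longrightarrow> \<exists>t \<in> sources V E. v \<in> reach E t"
proof -
  have "finite E" using assms finite_subset by blast
  then have "wf E" using assms finite_acyclic_wf by blast
  show "v \<in> V \<Longrightarrow> \<exists>t \<in> sources V E. v \<in> reach E t"
  proof (induction v rule: wf_induct[OF \<open>wf E\<close>])
    case (1 x)
    show ?case
    proof (cases "x \<in> sources V E")
      case True then show ?thesis unfolding reach_def by auto
    next
      case False
      then obtain u where "(u,x) \<in> E" using 1 unfolding sources_def by auto
      then have "u \<in> V" using assms by auto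
      then obtain t where "t \<in> sources V E" "u \<in> reach E t" using 1 \<open>(u,x) \<in> E\<close> by blast
      then show ?thesis using \<open>(u,x) \<in> E\<close> unfolding reach_def by (auto intro: rtrancl_into_rtrancl)
    qed
  qed
qed

lemma valid_exists:
  assumes "finite V" "E \<subseteq> V \<times> V" "acyclic E"
  shows "valid V E (\<lambda>v. SOME t. t \<in> sources V E \<and> v \<in> reach E t)"
  unfolding valid_def
proof
  fix v assume "v \<in> nonsources V E"
  then have "v \<in> V" unfolding nonsources_def by auto
  then show "(SOME t. t \<in> sources V E \<and> v \<in> reach E t) \<in> sources V E \<and> v \<in> reach E (SOME t. t \<in> sources V E \<and> v \<in> reach E t)"
    using someI_ex[OF reach_source[OF assms \<open>v \<in> V\<close>, unfolded Bex_def]] by blast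
qed



lemma Dp_pclosed: "E \<subseteq> V \<times> V \<Longrightarrow> pclosed (V - reach E w) E"
  unfolding pclosed_def reach_def by (auto intro: rtrancl_into_rtrancl)

lemma source_not_reach:
  assumes "t \<in> sources V E" "t \<noteq> w" shows "t \<notin> reach E w"
proof
  assume "t \<in> reach E w"
  then have "(w,t) \<in> E\<^sup>*" unfolding reach_def by simp
  then show False
  proof (cases rule: rtranclE)
    case base then show ?thesis using assms by simp
  next
    case (step y) then show ?thesis using assms unfolding sources_def by auto
  qed
qed

lemma Dp_sources:
  assumes "w \<in> sources V E"
  shows "sources V E \<inter> (V - reach E w) = sources V E - {w}"
proof -
  have "w \<in> reach E w" unfolding reach_def by simp
  moreover have "sources V E \<subseteq> V" unfolding sources_def by auto
  moreover have "t \<notin> reach E w" if "t \<in> sources V E" "t \<noteq> w" for t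
    using source_not_reach[OF that] .
  ultimately show ?thesis by auto
qed

lemma conn_Hf:
  assumes "E \<subseteq> V \<times> V" "gconnected V E" "valid V E f" "sources V E \<noteq> {}"
  shows "gconnected (sources V E) (Hf V E f)"
proof -
  let ?S = "sources V E" and ?H = "Hf V E f"
  define g where "g x = (if x \<in> ?S then x else f x)" for x
  have g: "g x \<in> ?S \<and> (g x, x) \<in> E\<^sup>*" if "x \<in> V" for x
  proof (cases "x \<in> ?S")
    case True then show ?thesis unfolding g_def by simp
  next
    case False
    then have "x \<in> nonsources V E" using that unfolding nonsources_def by simp
    then show ?thesis using assms(3) False unfolding valid_def g_def reach_def by simp
  qed
  have edge: "(g x, g y) \<in> (und ?S ?H)\<^sup>*" if "(x,y) \<in> E" for x y
  proof -
    have xy: "x \<in> V" "y \<in> V" using that assms(1) by auto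
    have "y \<notin> ?S" using that unfolding sources_def by auto
    then have yN: "y \<in> nonsources V E" using xy unfolding nonsources_def by simp
    have gy: "g y = f y" using \<open>y \<notin> ?S\<close> unfolding g_def by simp
    have "(g x, y) \<in> E\<^sup>*" using g[OF xy(1)] that by (auto intro: rtrancl_into_rtrancl)
    show ?thesis
    proof (cases "g x = g y")
      case True then show ?thesis by simp
    next
      case False
      have "(g x, g y) \<in> ?H" unfolding Hf_def reach_def
        using g[OF xy(1)] g[OF xy(2)] False yN \<open>(g x, y) \<in> E\<^sup>*\<close> gy by auto
      then have "(g x, g y) \<in> und ?S ?H" unfolding und_def Hf_def by auto
      then show ?thesis by simp
    qed
  qed
  have und_edge: "(g x, g y) \<in> (und ?S ?H)\<^sup>*" if "(x,y) \<in> und V E" for x y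
  proof -
    from that have "(x,y) \<in> E \<or> (y,x) \<in> E" unfolding und_def by auto
    then show ?thesis
    proof
      assume "(y,x) \<in> E"
      then have "(g y, g x) \<in> (und ?S ?H)\<^sup>*" by (rule edge)
      then show ?thesis by (rule und_rt_sym)
    qed (rule edge)
  qed
  have path: "(g x, g y) \<in> (und ?S ?H)\<^sup>*" if "(x,y) \<in> (und V E)\<^sup>*" for x y
    using that
  proof (induction rule: rtrancl_induct)
    case base then show ?case by simp
  next
    case (step y z)
    show ?case using rtrancl_trans[OF step.IH und_edge[OF step.hyps(2)]] .
  qed
  show ?thesis unfolding gconnected_def
  proof (intro conjI ballI)
    show "?S \<noteq> {}" by fact
    fix s s' assume "s \<in> ?S" "s' \<in> ?S"
    then have "s \<in> V" "s' \<in> V" unfolding sources_def by auto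
    then have "(s,s') \<in> (und V E)\<^sup>*" using assms(2) unfolding gconnected_def by simp
    from path[OF this] show "(s,s') \<in> (und ?S ?H)\<^sup>*" using \<open>s \<in> ?S\<close> \<open>s' \<in> ?S\<close> unfolding g_def by simp
  qed
qed

lemma sources_nonempty:
  assumes "finite V" "E \<subseteq> V \<times> V" "acyclic E" "V \<noteq> {}"
  shows "sources V E \<noteq> {}"
  using reach_source[OF assms(1-3)] assms(4) by blast

lemma sub_dag:
  assumes "E \<subseteq> V \<times> V" "acyclic E" "finite V" "D \<subseteq> V"
  shows "induced E D \<subseteq> D \<times> D" "acyclic (induced E D)" "finite D"
  using assms acyclic_subset[of E "induced E D"] finite_subset unfolding induced_def by auto

lemma U:
  assumes "finite V" "E \<subseteq> V \<times> V" "acyclic E" "valid V E f" "rank (sources V E) (Hf V E f) l k"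
  shows "\<exists>d\<le>k. dag_elim_depth V E d"
  using assms
proof (induction "card V" arbitrary: V E k rule: less_induct)
  case less
  show ?case
  proof (cases "V = {}")
    case True then show ?thesis using dag_elim_depth.empty by blast
  next
    case Vne: False
    have Sne: "sources V E \<noteq> {}" using sources_nonempty less.prems Vne by blast
    show ?thesis
    proof (cases "gconnected V E")
      case False
      have "\<forall>C\<in>comps V E. \<exists>d\<le>k. dag_elim_depth C (induced E C) d"
      proof
        fix C assume C: "C \<in> comps V E"
        have CV: "C \<subset> V" using comp_proper[OF False Vne C] .
        obtain x where x: "x \<in> V" "C = cc V E x" using C unfolding comps_eq by auto
        have pc: "pclosed C E" using cc_pclosed[OF less.prems(2) x(1)] x(2) by simp
        have CV': "C \<subseteq> V" using CV by blast
        note sd = sub_dag[OF less.prems(2,3,1) CV']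
        have c1: "card C < card V" using CV less.prems(1) psubset_card_mono by blast
        have c2: "valid C (induced E C) f" using pclosed_valid[OF pc CV' less.prems(4)] .
        have c3: "rank (sources C (induced E C)) (Hf C (induced E C) f) l k"
          apply (rule rank_mono[OF less.prems(5)])
          using pclosed_sources[OF pc CV'] pclosed_Hf[OF pc CV', of f] by auto
        show "\<exists>d\<le>k. dag_elim_depth C (induced E C) d"
          by (rule less.hyps[OF c1 sd(3) sd(1) sd(2) c2 c3])
      qed
      then obtain d where d: "\<forall>C\<in>comps V E. d C \<le> k \<and> dag_elim_depth C (induced E C) (d C)"
        by metis
      have "dag_elim_depth V E (Max (d ` comps V E))"
        using dag_elim_depth.disconnected[OF Vne False] d by blast
      moreover have "Max (d ` comps V E) \<le> k"
        using d comps_finite[OF less.prems(1)] Vne unfolding comps_eq by auto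
      ultimately show ?thesis by blast
    next
      case conn: True
      show ?thesis
      proof (cases "\<exists>t. sources V E = {t}")
        case True
        then obtain t where t: "sources V E = {t}" by blast
        then have "0 < k" using less.prems(5) unfolding rank_def by auto
        then show ?thesis using dag_elim_depth.one_source[OF conn t] by (intro exI[of _ 1]) auto
      next
        case nots: False
        have gc: "gconnected (sources V E) (Hf V E f)" using conn_Hf[OF less.prems(2) conn less.prems(4) Sne] .
        then obtain w where w: "w \<in> sources V E" "\<forall>y\<in>sources V E. y \<noteq> w \<longrightarrow> l y < l w"
          using less.prems(5) unfolding rank_def by blast
        have wk: "l w < k" using w(1) less.prems(5) unfolding rank_def by auto
        define D where "D = V - reach E w"
        have pc: "pclosed D E" unfolding D_def using Dp_pclosed[OF less.prems(2)] .
        have DV: "D \<subseteq> V" unfolding D_def by auto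
        have "w \<in> V" "w \<in> reach E w" using w(1) unfolding sources_def reach_def by auto
        then have "w \<notin> D" unfolding D_def by auto
        then have "D \<subset> V" using DV \<open>w \<in> V\<close> by blast
        then have "card D < card V" using \<open>w \<in> V\<close> less.prems(1) by (metis psubsetI psubset_card_mono)
        moreover have "valid D (induced E D) f" using pclosed_valid[OF pc DV less.prems(4)] .
        moreover have sD: "sources D (induced E D) = sources V E - {w}"
          using pclosed_sources[OF pc DV] Dp_sources[OF w(1)] unfolding D_def by simp
        moreover have "rank (sources D (induced E D)) (Hf D (induced E D) f) l (l w)"
          unfolding rank_def
        proof (intro conjI allI impI ballI)
          fix x assume "x \<in> sources D (induced E D)"
          then show "l x < l w" using w(2) sD by auto
        next
          fix X assume "X \<subseteq> sources D (induced E D)" "gconnected X (Hf D (induced E D) f)"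
          moreover have "X \<subseteq> sources V E" using calculation(1) sD by auto
          moreover have "gconnected X (Hf V E f)"
            using gconn_mono[OF calculation(2)] pclosed_Hf[OF pc DV, of f] by blast
          ultimately show "\<exists>x\<in>X. \<forall>y\<in>X. y \<noteq> x \<longrightarrow> l y < l x"
            using less.prems(5) unfolding rank_def by blast
        qed
        ultimately obtain d where d: "d \<le> l w" "dag_elim_depth D (induced E D) d"
          using less.hyps[of D "induced E D" "l w"] sub_dag[OF less.prems(2,3,1) DV] by auto
        have "dag_elim_depth V E (Suc d)"
          using dag_elim_depth.root[OF conn nots w(1)] d(2) unfolding D_def by blast
        then show ?thesis using d(1) wk by (intro exI[of _ "Suc d"]) auto
      qed
    qed
  qed
qed



lemma T1:
  assumes "finite V" "rank V H l k"
  shows "\<exists>d\<le>k. td_depth V H d"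
  using assms
proof (induction "card V" arbitrary: V H k rule: less_induct)
  case less
  show ?case
  proof (cases "V = {}")
    case True then show ?thesis using td_depth.empty by blast
  next
    case Vne: False
    show ?thesis
    proof (cases "gconnected V H")
      case False
      have "\<forall>C\<in>comps V H. \<exists>d\<le>k. td_depth C (induced H C) d"
      proof
        fix C assume C: "C \<in> comps V H"
        have CV: "C \<subset> V" using comp_proper[OF False Vne C] .
        have CV': "C \<subseteq> V" using CV by blast
        have c1: "card C < card V" using CV less.prems(1) psubset_card_mono by blast
        have c0: "finite C" using CV' less.prems(1) finite_subset by blast
        have c2: "rank C (induced H C) l k"
          apply (rule rank_mono[OF less.prems(2) CV'])
          unfolding induced_def by blast
        show "\<exists>d\<le>k. td_depth C (induced H C) d"
          by (rule less.hyps[OF c1 c0 c2])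
      qed
      then obtain d where d: "\<forall>C\<in>comps V H. d C \<le> k \<and> td_depth C (induced H C) (d C)"
        by metis
      have "td_depth V H (Max (d ` comps V H))"
        using td_depth.disconnected[OF Vne False] d by blast
      moreover have "Max (d ` comps V H) \<le> k"
        using d comps_finite[OF less.prems(1)] Vne unfolding comps_eq by auto
      ultimately show ?thesis by blast
    next
      case conn: True
      obtain v where v: "v \<in> V" "\<forall>y\<in>V. y \<noteq> v \<longrightarrow> l y < l v"
        using less.prems(2) conn unfolding rank_def by blast
      have vk: "l v < k" using v(1) less.prems(2) unfolding rank_def by auto
      have c1: "card (V - {v}) < card V" using v(1) less.prems(1) by (meson card_Diff1_less)
      have c0: "finite (V - {v})" using less.prems(1) by simp
      have c2: "rank (V - {v}) (induced H (V - {v})) l (l v)"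
        unfolding rank_def
      proof (intro conjI allI impI ballI)
        fix x assume "x \<in> V - {v}" then show "l x < l v" using v(2) by auto
      next
        fix X assume X: "X \<subseteq> V - {v}" "gconnected X (induced H (V - {v}))"
        have "gconnected X H" using gconn_mono[OF X(2)] unfolding induced_def by blast
        moreover have "X \<subseteq> V" using X(1) by blast
        ultimately show "\<exists>x\<in>X. \<forall>y\<in>X. y \<noteq> x \<longrightarrow> l y < l x"
          using less.prems(2) unfolding rank_def by blast
      qed
      obtain d where d: "d \<le> l v" "td_depth (V - {v}) (induced H (V - {v})) d"
        using less.hyps[OF c1 c0 c2] by blast
      have "td_depth V H (Suc d)" using td_depth.connected[OF conn v(1) d(2)] .
      then show ?thesis using d(1) vk by (intro exI[of _ "Suc d"]) auto
    qed
  qed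
qed

lemma X_in_cc:
  assumes "X \<subseteq> V" "gconnected X H" "x0 \<in> X"
  shows "X \<subseteq> cc V H x0"
proof
  fix y assume "y \<in> X"
  then have "(x0,y) \<in> (und X H)\<^sup>*" using assms unfolding gconnected_def by blast
  moreover have "und X H \<subseteq> und V H" using assms(1) unfolding und_def by blast
  ultimately have "(x0,y) \<in> (und V H)\<^sup>*" using rtrancl_mono by blast
  then show "y \<in> cc V H x0" unfolding cc_def by simp
qed

lemma T2:
  assumes "td_depth V H d"
  shows "finite V \<longrightarrow> (\<exists>l. rank V H l d)"
  using assms
proof (induction rule: td_depth.induct)
  case (empty V E)
  have "rank V E (\<lambda>_. 0) 0" unfolding rank_def gconnected_def using empty by auto
  then show ?case by blast
next
  case (disconnected V E d)
  show ?case
  proof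
    assume fin: "finite V"
    have "\<forall>C\<in>comps V E. \<exists>l. rank C (induced E C) l (d C)"
    proof
      fix C assume C: "C \<in> comps V E"
      obtain x where x: "x \<in> V" "C = cc V E x" using C unfolding comps_eq by auto
      have "finite C" using cc_sub[OF x(1)] x(2) fin finite_subset by metis
      moreover have "td_depth C (induced E C) (d C) \<and> (finite C \<longrightarrow> (\<exists>l. rank C (induced E C) l (d C)))"
        using disconnected.IH C by blast
      ultimately show "\<exists>l. rank C (induced E C) l (d C)" by blast
    qed
    from bchoice[OF this] obtain L where L: "\<forall>C\<in>comps V E. rank C (induced E C) (L C) (d C)" by blast
    define l where "l x = L (cc V E x) x" for x
    have fc: "finite (comps V E)" using comps_finite[OF fin] .
    have "rank V E l (Max (d ` comps V E))"
      unfolding rank_def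
    proof (intro conjI allI impI ballI)
      fix x assume x: "x \<in> V"
      then have C: "cc V E x \<in> comps V E" unfolding comps_eq by auto
      then have "rank (cc V E x) (induced E (cc V E x)) (L (cc V E x)) (d (cc V E x))" using L by blast
      then have "L (cc V E x) x < d (cc V E x)" using cc_self[of x V E] unfolding rank_def by blast
      moreover have "d (cc V E x) \<le> Max (d ` comps V E)" using fc C by simp
      ultimately show "l x < Max (d ` comps V E)" unfolding l_def by simp
    next
      fix X assume X: "X \<subseteq> V" "gconnected X E"
      then obtain x0 where x0: "x0 \<in> X" unfolding gconnected_def by auto
      let ?C = "cc V E x0"
      have XC: "X \<subseteq> ?C" using X_in_cc[OF X x0] .
      have C: "?C \<in> comps V E" using x0 X(1) unfolding comps_eq by auto
      have "gconnected X (induced E ?C)" apply (rule gconn_mono[OF X(2)]) using XC unfolding induced_def by blast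
      moreover have "rank ?C (induced E ?C) (L ?C) (d ?C)" using L C by blast
      ultimately obtain x where x: "x \<in> X" "\<forall>y\<in>X. y \<noteq> x \<longrightarrow> L ?C y < L ?C x"
        using XC unfolding rank_def by blast
      have "l y = L ?C y" if "y \<in> X" for y
      proof -
        have "cc V E y = ?C" using cc_eq[of y V E x0] XC that by blast
        then show ?thesis unfolding l_def by simp
      qed
      then show "\<exists>x\<in>X. \<forall>y\<in>X. y \<noteq> x \<longrightarrow> l y < l x" using x by auto
    qed
    then show "\<exists>l. rank V E l (Max (d ` comps V E))" by blast
  qed
next
  case (connected V E v d)
  show ?case
  proof
    assume fin: "finite V"
    then obtain l' where l': "rank (V - {v}) (induced E (V - {v})) l' d" using connected.IH by auto
    define l where "l = l'(v := d)"
    have lab: "\<forall>x\<in>V - {v}. l' x < d" using l' unfolding rank_def by (rule conjunct1)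
    have "rank V E l (Suc d)"
      unfolding rank_def
    proof (intro conjI allI impI ballI)
      fix x assume "x \<in> V" then show "l x < Suc d" using lab unfolding l_def by (cases "x = v") (auto simp: less_SucI)
    next
      fix X assume X: "X \<subseteq> V" "gconnected X E"
      show "\<exists>x\<in>X. \<forall>y\<in>X. y \<noteq> x \<longrightarrow> l y < l x"
      proof (cases "v \<in> X")
        case True
        have "\<forall>y\<in>X. y \<noteq> v \<longrightarrow> l y < l v" using lab X(1) unfolding l_def by auto
        then show ?thesis using True by blast
      next
        case False
        then have X': "X \<subseteq> V - {v}" using X(1) by blast
        have "gconnected X (induced E (V - {v}))" apply (rule gconn_mono[OF X(2)]) using X' unfolding induced_def by blast
        then obtain x where x: "x \<in> X" "\<forall>y\<in>X. y \<noteq> x \<longrightarrow> l' y < l' x"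
          using l' X' unfolding rank_def by blast
        then show ?thesis using False unfolding l_def by (intro bexI[of _ x]) auto
      qed
    qed
    then show "\<exists>l. rank V E l (Suc d)" by blast
  qed
qed



lemma E_und: "E \<subseteq> V \<times> V \<Longrightarrow> E \<subseteq> und V E"
  unfolding und_def by auto

lemma Hf_und:
  assumes "E \<subseteq> V \<times> V" "(a,b) \<in> Hf V E f"
  shows "(a,b) \<in> (und V E)\<^sup>*"
proof -
  obtain v where v: "(a,v) \<in> E\<^sup>*" "(b,v) \<in> E\<^sup>*" using assms(2) unfolding Hf_def reach_def by auto
  have "E\<^sup>* \<subseteq> (und V E)\<^sup>*" using rtrancl_mono[OF E_und[OF assms(1)]] .
  then have "(a,v) \<in> (und V E)\<^sup>*" "(b,v) \<in> (und V E)\<^sup>*" using v by auto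
  then show ?thesis using und_rt_sym[of b v V E] rtrancl_trans by metis
qed

lemma X_in_cc_Hf:
  assumes "E \<subseteq> V \<times> V" "gconnected X (Hf V E f)" "x0 \<in> X"
  shows "X \<subseteq> cc V E x0"
proof
  fix y assume "y \<in> X"
  then have "(x0,y) \<in> (und X (Hf V E f))\<^sup>*" using assms unfolding gconnected_def by blast
  moreover have "und X (Hf V E f) \<subseteq> (und V E)\<^sup>*"
  proof
    fix p assume "p \<in> und X (Hf V E f)"
    then obtain a b where p: "p = (a,b)" "(a,b) \<in> Hf V E f \<or> (b,a) \<in> Hf V E f" unfolding und_def by auto
    then show "p \<in> (und V E)\<^sup>*" using Hf_und[OF assms(1)] und_rt_sym by metis
  qed
  ultimately have "(x0,y) \<in> (und V E)\<^sup>*" using rtrancl_subset_rtrancl by blast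
  then show "y \<in> cc V E x0" unfolding cc_def by simp
qed

lemma Hf_comp:
  assumes "E \<subseteq> V \<times> V" "x0 \<in> V" "a \<in> cc V E x0" "b \<in> cc V E x0" "(a,b) \<in> Hf V E f"
    "\<forall>v\<in>cc V E x0. f v = g v"
  shows "(a,b) \<in> Hf (cc V E x0) (induced E (cc V E x0)) g"
proof -
  let ?C = "cc V E x0"
  have pc: "pclosed ?C E" using cc_pclosed[OF assms(1,2)] .
  have CV: "?C \<subseteq> V" using cc_sub[OF assms(2)] .
  obtain v where v: "a \<in> sources V E" "b \<in> sources V E" "a \<noteq> b" "v \<in> nonsources V E"
    "(a,v) \<in> E\<^sup>*" "(b,v) \<in> E\<^sup>*" "f v \<in> {a,b}"
    using assms(5) unfolding Hf_def reach_def by auto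
  have vC: "v \<in> ?C" using cc_fclosed[OF assms(1,3) v(5)] .
  have "(a,v) \<in> (induced E ?C)\<^sup>*" using pclosed_path[OF v(5) pc vC] by blast
  moreover have "(b,v) \<in> (induced E ?C)\<^sup>*" using pclosed_path[OF v(6) pc vC] by blast
  moreover have "a \<in> sources ?C (induced E ?C)" "b \<in> sources ?C (induced E ?C)"
    using pclosed_sources[OF pc CV] v(1,2) assms(3,4) by auto
  moreover have "v \<in> nonsources ?C (induced E ?C)" using pclosed_nonsources[OF pc CV] v(4) vC by auto
  moreover have "g v \<in> {a,b}" using assms(6) vC v(7) by auto
  ultimately show ?thesis using v(3) unfolding Hf_def reach_def by auto
qed

lemma L:
  assumes "dag_elim_depth V E d"
  shows "finite V \<longrightarrow> E \<subseteq> V \<times> V \<longrightarrow> acyclic E \<longrightarrow>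
    (\<exists>f l. valid V E f \<and> rank (sources V E) (Hf V E f) l d)"
  using assms
proof (induction rule: dag_elim_depth.induct)
  case (empty V E)
  have "valid V E id" "rank (sources V E) (Hf V E id) (\<lambda>_. 0) 0"
    using empty unfolding valid_def rank_def nonsources_def sources_def gconnected_def by auto
  then show ?case by blast
next
  case (disconnected V E d)
  show ?case
  proof (intro impI)
    assume fin: "finite V" and sub: "E \<subseteq> V \<times> V" and ac: "acyclic E"
    have "\<forall>C\<in>comps V E. \<exists>f l. valid C (induced E C) f \<and> rank (sources C (induced E C)) (Hf C (induced E C) f) l (d C)"
    proof
      fix C assume C: "C \<in> comps V E"
      obtain x where x: "x \<in> V" "C = cc V E x" using C unfolding comps_eq by auto
      have CV: "C \<subseteq> V" using cc_sub[OF x(1)] x(2) by simp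
      note sd = sub_dag[OF sub ac fin CV]
      have "dag_elim_depth C (induced E C) (d C) \<and> (finite C \<longrightarrow> induced E C \<subseteq> C \<times> C \<longrightarrow> acyclic (induced E C) \<longrightarrow>
         (\<exists>f l. valid C (induced E C) f \<and> rank (sources C (induced E C)) (Hf C (induced E C) f) l (d C)))"
        using disconnected.IH C by blast
      then show "\<exists>f l. valid C (induced E C) f \<and> rank (sources C (induced E C)) (Hf C (induced E C) f) l (d C)"
        using sd by blast
    qed
    from bchoice[OF this] obtain F where
      "\<forall>C\<in>comps V E. \<exists>l. valid C (induced E C) (F C) \<and> rank (sources C (induced E C)) (Hf C (induced E C) (F C)) l (d C)"
      by blast
    from bchoice[OF this] obtain L where FL:
      "\<forall>C\<in>comps V E. valid C (induced E C) (F C) \<and> rank (sources C (induced E C)) (Hf C (induced E C) (F C)) (L C) (d C)"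
      by blast
    define f where "f v = F (cc V E v) v" for v
    define l where "l x = L (cc V E x) x" for x
    have fc: "finite (comps V E)" using comps_finite[OF fin] .
    have ccC: "cc V E x \<in> comps V E" if "x \<in> V" for x using that unfolding comps_eq by auto
    have FLx: "valid (cc V E x) (induced E (cc V E x)) (F (cc V E x)) \<and>
        rank (sources (cc V E x) (induced E (cc V E x))) (Hf (cc V E x) (induced E (cc V E x)) (F (cc V E x))) (L (cc V E x)) (d (cc V E x))"
      if "x \<in> V" for x using FL ccC[OF that] by blast
    have pcx: "pclosed (cc V E x) E" "cc V E x \<subseteq> V" if "x \<in> V" for x
      using cc_pclosed[OF sub that] cc_sub[OF that] by auto
    have "valid V E f"
      unfolding valid_def
    proof
      fix v assume vN: "v \<in> nonsources V E"
      then have vV: "v \<in> V" unfolding nonsources_def by auto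
      let ?C = "cc V E v"
      have "v \<in> nonsources ?C (induced E ?C)" using pclosed_nonsources[OF pcx[OF vV]] vN cc_self[of v V E] by auto
      then have "F ?C v \<in> sources ?C (induced E ?C) \<and> v \<in> reach (induced E ?C) (F ?C v)"
        using FLx[OF vV] unfolding valid_def by blast
      then show "f v \<in> sources V E \<and> v \<in> reach E (f v)"
        using pclosed_sources[OF pcx[OF vV]] induced_rt unfolding f_def reach_def by auto
    qed
    moreover have "rank (sources V E) (Hf V E f) l (Max (d ` comps V E))"
      unfolding rank_def
    proof (intro conjI allI impI ballI)
      fix x assume xS: "x \<in> sources V E"
      then have xV: "x \<in> V" unfolding sources_def by auto
      have "x \<in> sources (cc V E x) (induced E (cc V E x))"
        using pclosed_sources[OF pcx[OF xV]] xS cc_self[of x V E] by auto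
      then have "L (cc V E x) x < d (cc V E x)" using conjunct2[OF FLx[OF xV]] unfolding rank_def by blast
      moreover have "d (cc V E x) \<le> Max (d ` comps V E)" using fc ccC[OF xV] by simp
      ultimately show "l x < Max (d ` comps V E)" unfolding l_def by simp
    next
      fix X assume X: "X \<subseteq> sources V E" "gconnected X (Hf V E f)"
      then obtain x0 where x0: "x0 \<in> X" unfolding gconnected_def by auto
      have x0V: "x0 \<in> V" using X(1) x0 unfolding sources_def by auto
      let ?C = "cc V E x0"
      have XC: "X \<subseteq> ?C" using X_in_cc_Hf[OF sub X(2) x0] .
      have fg: "\<forall>v\<in>?C. f v = F ?C v" unfolding f_def using cc_eq[of _ V E x0] by simp
      have "gconnected X (Hf ?C (induced E ?C) (F ?C))"
        apply (rule gconn_mono[OF X(2)])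
        using Hf_comp[OF sub x0V _ _ _ fg] XC by blast
      moreover have "X \<subseteq> sources ?C (induced E ?C)"
        using pclosed_sources[OF pcx[OF x0V]] X(1) XC by auto
      moreover have "rank (sources ?C (induced E ?C)) (Hf ?C (induced E ?C) (F ?C)) (L ?C) (d ?C)"
        using FLx[OF x0V] by blast
      ultimately obtain x where x: "x \<in> X" "\<forall>y\<in>X. y \<noteq> x \<longrightarrow> L ?C y < L ?C x"
        unfolding rank_def by blast
      have "l y = L ?C y" if "y \<in> X" for y
      proof -
        have "cc V E y = ?C" using cc_eq[of y V E x0] XC that by blast
        then show ?thesis unfolding l_def by simp
      qed
      then show "\<exists>x\<in>X. \<forall>y\<in>X. y \<noteq> x \<longrightarrow> l y < l x" using x by auto
    qed
    ultimately show "\<exists>f l. valid V E f \<and> rank (sources V E) (Hf V E f) l (Max (d ` comps V E))" by blast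
  qed
next
  case (one_source V E s)
  show ?case
  proof (intro impI)
    assume fin: "finite V" and sub: "E \<subseteq> V \<times> V" and ac: "acyclic E"
    have "valid V E (\<lambda>_. s)"
      unfolding valid_def
    proof
      fix v assume "v \<in> nonsources V E"
      then have "v \<in> V" unfolding nonsources_def by auto
      then show "s \<in> sources V E \<and> v \<in> reach E s" using reach_source[OF fin sub ac] one_source.hyps(2) by auto
    qed
    moreover have "rank (sources V E) (Hf V E (\<lambda>_. s)) (\<lambda>_. 0) 1"
      unfolding rank_def
    proof (intro conjI allI impI ballI)
      fix X assume "X \<subseteq> sources V E" "gconnected X (Hf V E (\<lambda>_. s))"
      then have "X = {s}" using one_source.hyps(2) unfolding gconnected_def by auto
      then show "\<exists>x\<in>X. \<forall>y\<in>X. y \<noteq> x \<longrightarrow> (0::nat) < 0" by auto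
    qed simp
    ultimately show "\<exists>f l. valid V E f \<and> rank (sources V E) (Hf V E f) l 1" by blast
  qed
next
  case (root V E s d)
  show ?case
  proof (intro impI)
    assume fin: "finite V" and sub: "E \<subseteq> V \<times> V" and ac: "acyclic E"
    let ?D = "V - reach E s"
    have DV: "?D \<subseteq> V" by auto
    have pc: "pclosed ?D E" using Dp_pclosed[OF sub] .
    note sd = sub_dag[OF sub ac fin DV]
    obtain f' l' where f': "valid ?D (induced E ?D) f'" and l': "rank (sources ?D (induced E ?D)) (Hf ?D (induced E ?D) f') l' d"
      using root.IH sd by blast
    have sD: "sources ?D (induced E ?D) = sources V E - {s}"
      using pclosed_sources[OF pc DV] Dp_sources[OF root.hyps(3)] by simp
    have nD: "nonsources ?D (induced E ?D) = nonsources V E \<inter> ?D" using pclosed_nonsources[OF pc DV] .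
    have lab: "\<forall>x\<in>sources V E - {s}. l' x < d" using l' unfolding rank_def sD by (rule conjunct1)
    define f where "f v = (if v \<in> reach E s then s else f' v)" for v
    define l where "l x = (if x = s then d else l' x)" for x
    have "valid V E f"
      unfolding valid_def
    proof
      fix v assume vN: "v \<in> nonsources V E"
      show "f v \<in> sources V E \<and> v \<in> reach E (f v)"
      proof (cases "v \<in> reach E s")
        case True then show ?thesis using root.hyps(3) unfolding f_def by simp
      next
        case False
        then have "v \<in> nonsources ?D (induced E ?D)" using nD vN unfolding nonsources_def by auto
        then have "f' v \<in> sources ?D (induced E ?D) \<and> v \<in> reach (induced E ?D) (f' v)"
          using f' unfolding valid_def by blast
        then have "f' v \<in> sources V E" "(f' v, v) \<in> E\<^sup>*"
          using sD induced_rt[of "f' v" v E ?D] unfolding reach_def by auto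
        then show ?thesis using False unfolding f_def reach_def by simp
      qed
    qed
    moreover have "rank (sources V E) (Hf V E f) l (Suc d)"
      unfolding rank_def
    proof (intro conjI allI impI ballI)
      fix x assume "x \<in> sources V E" then show "l x < Suc d" using lab unfolding l_def by (cases "x = s") (auto simp: less_SucI)
    next
      fix X assume X: "X \<subseteq> sources V E" "gconnected X (Hf V E f)"
      show "\<exists>x\<in>X. \<forall>y\<in>X. y \<noteq> x \<longrightarrow> l y < l x"
      proof (cases "s \<in> X")
        case True
        have "\<forall>y\<in>X. y \<noteq> s \<longrightarrow> l y < l s" using lab X(1) unfolding l_def by auto
        then show ?thesis using True by blast
      next
        case False
        then have X': "X \<subseteq> sources ?D (induced E ?D)" using X(1) sD by blast
        have edge: "(a,b) \<in> Hf ?D (induced E ?D) f'" if ab: "a \<in> X" "b \<in> X" "(a,b) \<in> Hf V E f" for a b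
        proof -
          obtain v where v: "a \<in> sources V E" "b \<in> sources V E" "a \<noteq> b" "v \<in> nonsources V E"
            "(a,v) \<in> E\<^sup>*" "(b,v) \<in> E\<^sup>*" "f v \<in> {a,b}"
            using ab(3) unfolding Hf_def reach_def by auto
          have "v \<notin> reach E s" using v(7) False ab(1,2) unfolding f_def by auto
          then have vD: "v \<in> ?D" using v(4) unfolding nonsources_def by auto
          have fv: "f' v \<in> {a,b}" using v(7) \<open>v \<notin> reach E s\<close> unfolding f_def by simp
          have "(a,v) \<in> (induced E ?D)\<^sup>*" using pclosed_path[OF v(5) pc vD] by blast
          moreover have "(b,v) \<in> (induced E ?D)\<^sup>*" using pclosed_path[OF v(6) pc vD] by blast
          moreover have "a \<in> sources ?D (induced E ?D)" "b \<in> sources ?D (induced E ?D)" using X' ab(1,2) by auto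
          moreover have "v \<in> nonsources ?D (induced E ?D)" using nD v(4) vD by auto
          ultimately show ?thesis using v(3) fv unfolding Hf_def reach_def by auto
        qed
        have "gconnected X (Hf ?D (induced E ?D) f')"
          apply (rule gconn_mono[OF X(2)]) using edge by blast
        then obtain x where x: "x \<in> X" "\<forall>y\<in>X. y \<noteq> x \<longrightarrow> l' y < l' x"
          using l' X' unfolding rank_def by blast
        then show ?thesis using False unfolding l_def by (intro bexI[of _ x]) auto
      qed
    qed
    ultimately show "\<exists>f l. valid V E f \<and> rank (sources V E) (Hf V E f) l (Suc d)" by blast
  qed
qed

lemma inj_rank:
  assumes "finite S" "inj_on g S" "\<forall>x\<in>S. g x < k"
  shows "rank S H g k"
  unfolding rank_def
proof (intro conjI allI impI)
  show "\<forall>x\<in>S. g x < k" by fact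
  fix X assume X: "X \<subseteq> S" "gconnected X H"
  then have ne: "X \<noteq> {}" unfolding gconnected_def by simp
  have fX: "finite X" using X(1) assms(1) finite_subset by blast
  have "Max (g ` X) \<in> g ` X" using Max_in[OF finite_imageI[OF fX]] ne by simp
  then obtain x where x: "x \<in> X" "g x = Max (g ` X)" by (metis imageE)
  have "g y < g x" if "y \<in> X" "y \<noteq> x" for y
  proof -
    have "g y \<le> g x" using Max_ge[OF finite_imageI[OF fX] imageI[OF that(1)]] x(2) by simp
    moreover have "y \<in> S" "x \<in> S" using X(1) that(1) x(1) by auto
    then have "g y \<noteq> g x" using inj_onD[OF assms(2)] that(2) by blast
    ultimately show ?thesis by simp
  qed
  then show "\<exists>x\<in>X. \<forall>y\<in>X. y \<noteq> x \<longrightarrow> g y < g x" using x(1) by blast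
qed

theorem mainTheorem6:
  fixes V :: "'a set" and E :: "('a \<times> 'a) set"
  assumes "dag V E"
  shows "\<exists>H1 \<in> contraction_graphs V E. \<exists>H2 \<in> contraction_graphs V E.
           td (sources V E) H1 \<le> dtd V E \<and> dtd V E \<le> td (sources V E) H2"
proof -
  have fin: "finite V" and sub: "E \<subseteq> V \<times> V" and ac: "acyclic E" using assms unfolding dag_def by auto
  let ?S = "sources V E"
  have finS: "finite ?S" using fin unfolding sources_def by simp
  note v0 = valid_exists[OF fin sub ac]
  obtain g where g: "bij_betw g ?S {0..<card ?S}" using ex_bij_betw_finite_nat[OF finS] by blast
  have "rank ?S (Hf V E (\<lambda>v. SOME t. t \<in> sources V E \<and> v \<in> reach E t)) g (card ?S)"
    apply (rule inj_rank[OF finS bij_betw_imp_inj_on[OF g]])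
    using bij_betw_apply[OF g] by simp
  then obtain d0 where "dag_elim_depth V E d0" using U[OF fin sub ac v0] by blast
  then have dtd: "dag_elim_depth V E (dtd V E)" unfolding dtd_def by (rule LeastI)
  obtain f l where f: "valid V E f" and l: "rank ?S (Hf V E f) l (dtd V E)"
    using L[OF dtd, rule_format, OF fin sub ac] by blast
  obtain d1 where d1: "d1 \<le> dtd V E" "td_depth ?S (Hf V E f) d1" using T1[OF finS l] by blast
  have "td ?S (Hf V E f) \<le> d1" unfolding td_def using d1(2) by (rule Least_le)
  then have le1: "td ?S (Hf V E f) \<le> dtd V E" using d1(1) by simp
  have tdd: "td_depth ?S (Hf V E f) (td ?S (Hf V E f))" unfolding td_def using d1(2) by (rule LeastI)
  obtain l2 where l2: "rank ?S (Hf V E f) l2 (td ?S (Hf V E f))" using T2[OF tdd, rule_format, OF finS] by blast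
  obtain d2 where d2: "d2 \<le> td ?S (Hf V E f)" "dag_elim_depth V E d2" using U[OF fin sub ac f l2] by blast
  have "dtd V E \<le> d2" unfolding dtd_def using d2(2) by (rule Least_le)
  then have le2: "dtd V E \<le> td ?S (Hf V E f)" using d2(1) by simp
  show ?thesis using Hf_in[OF f] le1 le2 by blast
qed


end
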